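(* Let $q$ be a prime power and $n\ge3$. Then $\chi_{n-1}\!\left(\binom n2\times n,q\right)\ge q^n-1$.
   Context: For positive integers $N\ge n$, $\mathbb{F}_q^{N\times n}$ is the set of $N\times n$ matrices over $\mathbb{F}_q$. An exactly $d$-distance coloring is a map $\Gamma:\mathbb{F}_q^{N\times n}\to\{1,\dots,L\}$ such that $\Gamma(M_1)\ne\Gamma(M_2)$ whenever $\mathrm{Rk}(M_1-M_2)=d$. $\chi_d(N\times n,q)$ denotes the minimum number $L$ of colors in an exactly $d$-distance coloring; here $N=\binom n2$. *)

theory Defs
  imports "Jordan_Normal_Form.DL_Rank"
begin

definition exact_dist_coloring ::
  "nat \<Rightarrow> nat \<Rightarrow> nat \<Rightarrow> nat \<Rightarrow> ('a::field mat \<Rightarrow> nat) \<Rightarrow> bool" where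
  "exact_dist_coloring d N n L \<Gamma> \<longleftrightarrow>
     (\<forall>M \<in> carrier_mat N n. \<Gamma> M \<in> {1..L}) \<and>
     (\<forall>M1 \<in> carrier_mat N n. \<forall>M2 \<in> carrier_mat N n.
        vec_space.rank N (M1 - M2) = d \<longrightarrow> \<Gamma> M1 \<noteq> \<Gamma> M2)"

definition chi :: "'a::field itself \<Rightarrow> nat \<Rightarrow> nat \<Rightarrow> nat \<Rightarrow> nat" where
  "chi _ d N n = (LEAST L. \<exists>\<Gamma> :: 'a mat \<Rightarrow> nat. exact_dist_coloring d N n L \<Gamma>)"

end

theory Submission imports Defs "HOL-Library.FuncSet" begin

lemma rank_lt_kernel:
  fixes A :: "'a::field mat"
  assumes A: "A \<in> carrier_mat N n" and v: "v \<in> carrier_vec n" "v \<noteq> 0\<^sub>v n" "A *\<^sub>v v = 0\<^sub>v N"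
  shows "vec_space.rank N A < n"
proof -
  interpret vec_space "TYPE('a)" N .
  obtain S where S: "maximal S (\<lambda>T. T \<subseteq> set (cols A) \<and> lin_indpt T)"
    using maximal_exists[of "(\<lambda>T. T \<subseteq> set (cols A) \<and> lin_indpt T)" "card (set (cols A))" "{}"]
    by (meson List.finite_set card_mono empty_iff empty_subsetI finite_lin_indpt2 rev_finite_subset)
  have r: "rank A = card S" by (rule rank_card_indpt[OF A S])
  have Ssub: "S \<subseteq> set (cols A)" "lin_indpt S" using S by (auto simp: maximal_def)
  have cl: "card (set (cols A)) \<le> n" using A by (metis card_length cols_length carrier_matD(2))
  show ?thesis
  proof (cases "distinct (cols A)")
    case True
    then have "lin_dep (set (cols A))" using lin_depI[OF A v] by auto
    then have "S \<noteq> set (cols A)" using Ssub by auto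
    then have "S \<subset> set (cols A)" using Ssub by auto
    then have "card S < card (set (cols A))" by (simp add: psubset_card_mono)
    with r cl show ?thesis by simp
  next
    case False
    then have "card (set (cols A)) \<noteq> length (cols A)" using card_distinct by blast
    then have "card (set (cols A)) < n" using A by (metis card_length cols_length carrier_matD(2) le_neq_implies_less)
    moreover have "card S \<le> card (set (cols A))" using Ssub by (simp add: card_mono)
    ultimately show ?thesis using r by simp
  qed
qed

lemma rank_ge_rows:
  fixes A B :: "'a::field mat"
  assumes A: "A \<in> carrier_mat N n" and B: "B \<in> carrier_mat N m"
    and sub: "set (cols B) \<subseteq> set (cols A)"
    and rows: "\<And>i. i < m \<Longrightarrow> \<exists>r<N. \<exists>s. s \<noteq> 0 \<and> (\<forall>i'<m. B $$ (r,i') = (if i' = i then s else 0))"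
  shows "m \<le> vec_space.rank N A"
proof -
  interpret vec_space "TYPE('a)" N .
  have dist: "distinct (cols B)"
  proof (subst distinct_conv_nth, intro allI impI)
    fix i j assume ij: "i < length (cols B)" "j < length (cols B)" "i \<noteq> j"
    then have im: "i < m" "j < m" using B by auto
    obtain r s where rs: "r < N" "s \<noteq> 0" "\<forall>i'<m. B $$ (r,i') = (if i' = i then s else 0)"
      using rows[OF im(1)] by blast
    have "col B i $ r \<noteq> col B j $ r" using rs im ij B by auto
    then show "cols B ! i \<noteq> cols B ! j" using im B by auto
  qed
  have ker: "w = 0\<^sub>v m" if w: "w \<in> carrier_vec m" "B *\<^sub>v w = 0\<^sub>v N" for w
  proof (rule eq_vecI)
    show "dim_vec w = dim_vec (0\<^sub>v m)" using w by auto
    fix i assume "i < dim_vec (0\<^sub>v m)"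
    then have im: "i < m" by auto
    obtain r s where rs: "r < N" "s \<noteq> 0" "\<forall>i'<m. B $$ (r,i') = (if i' = i then s else 0)"
      using rows[OF im] by blast
    have "0 = (B *\<^sub>v w) $ r" using w rs by auto
    also have "\<dots> = (\<Sum>j = 0..<m. B $$ (r,j) * w $ j)"
      using rs(1) B w(1) by (auto simp: scalar_prod_def intro!: sum.cong)
    also have "\<dots> = (\<Sum>j = 0..<m. if j = i then s * w $ i else 0)"
      using rs by (intro sum.cong) auto
    also have "\<dots> = s * w $ i" using im by simp
    finally show "w $ i = 0\<^sub>v m $ i" using rs im by auto
  qed
  have indpt: "lin_indpt (set (cols B))"
  proof
    assume "lin_dep (set (cols B))"
    then obtain v where "v \<in> carrier_vec m" "v \<noteq> 0\<^sub>v m" "B *\<^sub>v v = 0\<^sub>v N"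
      using lin_depE[OF B _ dist] by blast
    then show False using ker by blast
  qed
  have "card (set (cols B)) \<le> rank A" by (rule rank_ge_card_indpt[OF A sub indpt])
  moreover have "card (set (cols B)) = m" using distinct_card[OF dist] B by auto
  ultimately show ?thesis by simp
qed

definition Ps :: "nat \<Rightarrow> nat set set" where "Ps n = {P. P \<subseteq> {..<n} \<and> card P = 2}"

definition Mm :: "(nat \<Rightarrow> nat set) \<Rightarrow> nat \<Rightarrow> nat \<Rightarrow> (nat \<Rightarrow> 'a::field) \<Rightarrow> 'a mat" where
  "Mm h N n v = mat N n (\<lambda>(r,c). (if c = Max (h r) then v (Min (h r)) else 0)
       - (if c = Min (h r) then v (Max (h r)) else 0))"

lemma Ps_E:
  assumes "P \<in> Ps n"
  obtains a b where "P = {a,b}" "a < b" "b < n"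
proof -
  obtain a b where ab: "P = {a,b}" "a \<noteq> b" using assms unfolding Ps_def by (auto simp: card_2_iff)
  show ?thesis
  proof (cases "a < b")
    case True then show ?thesis using that[of a b] ab assms unfolding Ps_def by auto
  next
    case False then show ?thesis using that[of b a] ab assms unfolding Ps_def by auto
  qed
qed

lemma pair_row:
  assumes "bij_betw h {0..<N} (Ps n)" "a < n" "b < n" "a \<noteq> b"
  shows "\<exists>r<N. h r = {a,b}"
proof -
  have "{a,b} \<in> Ps n" using assms unfolding Ps_def by auto
  then have "{a,b} \<in> h ` {0..<N}" using assms(1) unfolding bij_betw_def by simp
  then obtain r where "r \<in> {0..<N}" "{a,b} = h r" by (rule imageE)
  then show ?thesis by auto
qed

lemma Mm_minus:
  "Mm h N n v - Mm h N n w = Mm h N n (\<lambda>i. v i - w i)"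
  unfolding Mm_def by (rule eq_matI) auto

lemma Mm_carrier: "Mm h N n v \<in> carrier_mat N n"
  unfolding Mm_def by auto

lemma entry_pair:
  fixes u :: "nat \<Rightarrow> 'a::field"
  shows "k \<noteq> c0 \<Longrightarrow> c \<noteq> k \<Longrightarrow> (if c = Max {k,c0} then u (Min {k,c0}) else 0)
   - (if c = Min {k,c0} then u (Max {k,c0}) else 0) = (if c = c0 then (if k < c0 then u k else - u k) else 0)"
  by (cases "k < c0") (auto simp: max_def min_def)

lemma Mm_rank:
  fixes u :: "nat \<Rightarrow> 'a::field"
  assumes h: "bij_betw h {0..<N} (Ps n)" and k: "k < n" "u k \<noteq> 0"
  shows "vec_space.rank N (Mm h N n u) = n - 1"
proof -
  let ?A = "Mm h N n u"
  have A: "?A \<in> carrier_mat N n" by (rule Mm_carrier)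
  have up: "vec_space.rank N ?A < n"
  proof (rule rank_lt_kernel[OF A, of "vec n u"])
    show "vec n u \<in> carrier_vec n" by simp
    show "vec n u \<noteq> 0\<^sub>v n"
    proof
      assume "vec n u = 0\<^sub>v n"
      then have "vec n u $ k = 0\<^sub>v n $ k" by simp
      then show False using k by simp
    qed
    show "?A *\<^sub>v vec n u = 0\<^sub>v N"
    proof (rule eq_vecI)
      show "dim_vec (?A *\<^sub>v vec n u) = dim_vec (0\<^sub>v N)" using A by simp
      fix r assume "r < dim_vec (0\<^sub>v N)"
      then have r: "r < N" by simp
      then have "h r \<in> Ps n" using h unfolding bij_betw_def by auto
      then obtain a b where ab: "h r = {a,b}" "a < b" "b < n" by (rule Ps_E)
      have "(?A *\<^sub>v vec n u) $ r = (\<Sum>c = 0..<n. ((if c = b then u a else 0) - (if c = a then u b else 0)) * u c)"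
        using r ab unfolding Mm_def by (auto simp: scalar_prod_def intro!: sum.cong)
      also have "\<dots> = (\<Sum>c = 0..<n. (if c = b then u a * u c else 0)) - (\<Sum>c = 0..<n. (if c = a then u b * u c else 0))"
        unfolding sum_subtractf[symmetric] by (intro sum.cong) (auto simp: left_diff_distrib)
      also have "\<dots> = 0" using ab by simp
      finally show "(?A *\<^sub>v vec n u) $ r = 0\<^sub>v N $ r" using r by simp
    qed
  qed
  define sk where "sk = (\<lambda>c::nat. if c < k then c else Suc c)"
  define B where "B = mat N (n-1) (\<lambda>(r,c). ?A $$ (r, sk c))"
  have skn: "sk c < n" if "c < n - 1" for c using that k unfolding sk_def by auto
  have B: "B \<in> carrier_mat N (n-1)" unfolding B_def by auto
  have low: "n - 1 \<le> vec_space.rank N ?A"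
  proof (rule rank_ge_rows[OF A B])
    show "set (cols B) \<subseteq> set (cols ?A)"
    proof
      fix x assume "x \<in> set (cols B)"
      then obtain c where c: "c < n - 1" "x = col B c" using B by (auto simp: in_set_conv_nth)
      have "x = col ?A (sk c)" using c A B skn[OF c(1)] unfolding B_def by (auto intro!: eq_vecI)
      then show "x \<in> set (cols ?A)" using skn[OF c(1)] A by (auto simp: in_set_conv_nth intro!: exI[of _ "sk c"])
    qed
    fix i assume i: "i < n - 1"
    have c0: "sk i < n" "sk i \<noteq> k" using skn[OF i] unfolding sk_def by auto
    obtain r where r: "r < N" "h r = {k, sk i}" using pair_row[OF h k(1) c0(1)] c0 by metis
    have inj: "sk i' = sk i \<longleftrightarrow> i' = i" for i' unfolding sk_def by auto
    have skk: "sk i' \<noteq> k" for i' unfolding sk_def by auto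
    show "\<exists>r<N. \<exists>s. s \<noteq> 0 \<and> (\<forall>i'<n - 1. B $$ (r, i') = (if i' = i then s else 0))"
    proof (intro exI conjI allI impI)
      show "r < N" by fact
      show "(if k < sk i then u k else - u k) \<noteq> 0" using k by auto
      fix i' assume i': "i' < n - 1"
      have "B $$ (r, i') = ?A $$ (r, sk i')" using r i' unfolding B_def by simp
      also have "\<dots> = (if sk i' = Max {k, sk i} then u (Min {k, sk i}) else 0)
           - (if sk i' = Min {k, sk i} then u (Max {k, sk i}) else 0)"
        using r skn[OF i'] unfolding Mm_def by simp
      also have "\<dots> = (if sk i' = sk i then (if k < sk i then u k else - u k) else 0)"
        by (rule entry_pair) (use c0 skk in auto)
      finally show "B $$ (r, i') = (if i' = i then (if k < sk i then u k else - u k) else 0)"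
        using inj[of i'] by simp
    qed
  qed
  show ?thesis using up low by simp
qed

lemma finite_carrier_mat: "finite (carrier_mat N n :: 'a::finite mat set)"
proof -
  let ?S = "{0..<N} \<times> {0..<n}"
  have "carrier_mat N n \<subseteq> (\<lambda>f. mat N n f) ` (PiE ?S (\<lambda>_. (UNIV :: 'a set)))"
  proof
    fix A :: "'a mat" assume A: "A \<in> carrier_mat N n"
    have "A = mat N n (restrict (\<lambda>ij. A $$ ij) ?S)"
      using A by (intro eq_matI) auto
    moreover have "restrict (\<lambda>ij. A $$ ij) ?S \<in> PiE ?S (\<lambda>_. UNIV)" by simp
    ultimately show "A \<in> (\<lambda>f. mat N n f) ` (PiE ?S (\<lambda>_. (UNIV :: 'a set)))" by blast
  qed
  moreover have "finite (PiE ?S (\<lambda>_. (UNIV :: 'a set)))" by (intro finite_PiE) auto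
  ultimately show ?thesis using finite_subset by blast
qed

lemma coloring_exists:
  assumes "d > 0"
  shows "\<exists>L \<Gamma>. exact_dist_coloring d N n L (\<Gamma> :: 'a::{finite,field} mat \<Rightarrow> nat)"
proof -
  let ?C = "carrier_mat N n :: 'a mat set"
  obtain g where g: "bij_betw g ?C {0..<card ?C}"
    using ex_bij_betw_finite_nat[OF finite_carrier_mat] by blast
  have "exact_dist_coloring d N n (card ?C) (\<lambda>M. Suc (g M))"
    unfolding exact_dist_coloring_def
  proof (intro conjI ballI impI)
    fix M assume "M \<in> ?C"
    then have "g M < card ?C" using g unfolding bij_betw_def by auto
    then show "Suc (g M) \<in> {1..card ?C}" by simp
  next
    fix M1 M2 assume M: "M1 \<in> ?C" "M2 \<in> ?C" and r: "vec_space.rank N (M1 - M2) = d"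
    show "Suc (g M1) \<noteq> Suc (g M2)"
    proof
      assume "Suc (g M1) = Suc (g M2)"
      then have "M1 = M2" using g M unfolding bij_betw_def inj_on_def by auto
      then have "M1 - M2 = 0\<^sub>m N n" using M minus_r_inv_mat by blast
      moreover have "vec_space.rank N (0\<^sub>m N n :: 'a mat) = 0" by (rule vec_space.rank_0I)
      ultimately show False using r assms by simp
    qed
  qed
  then show ?thesis by blast
qed

lemma coloring_bound:
  fixes \<Gamma> :: "'a::{finite,field} mat \<Rightarrow> nat"
  assumes h: "bij_betw h {0..<N} (Ps n)"
    and col: "exact_dist_coloring (n - 1) N n L \<Gamma>"
  shows "card (UNIV :: 'a set) ^ n \<le> L"
proof -
  let ?V = "PiE {..<n} (\<lambda>_. (UNIV :: 'a set))"
  let ?f = "\<lambda>v. \<Gamma> (Mm h N n v)"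
  have inj: "inj_on ?f ?V"
  proof
    fix v w assume v: "v \<in> ?V" and w: "w \<in> ?V" and eq: "?f v = ?f w"
    show "v = w"
    proof (rule ccontr)
      assume "v \<noteq> w"
      then obtain k where k: "k < n" "v k \<noteq> w k" using PiE_ext[OF v w] by auto
      have "vec_space.rank N (Mm h N n v - Mm h N n w) = n - 1"
        unfolding Mm_minus by (rule Mm_rank[OF h k(1)]) (use k in simp)
      then have "?f v \<noteq> ?f w" using col Mm_carrier unfolding exact_dist_coloring_def by blast
      then show False using eq by simp
    qed
  qed
  have sub: "?f ` ?V \<subseteq> {1..L}" using col Mm_carrier unfolding exact_dist_coloring_def by blast
  have "card ?V \<le> card {1..L}" using card_inj_on_le[OF inj sub] by simp
  moreover have "card ?V = card (UNIV :: 'a set) ^ n" by (simp add: card_PiE)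
  ultimately show ?thesis by simp
qed

theorem proposition4p3:
  fixes n :: nat
  assumes "n \<ge> 3"
  shows "chi TYPE('a::{finite,field}) (n - 1) (n choose 2) n \<ge> card (UNIV :: 'a set) ^ n - 1"
proof -
  let ?N = "n choose 2"
  have "finite (Ps n)" unfolding Ps_def by simp
  moreover have "card (Ps n) = ?N" unfolding Ps_def using n_subsets[of "{..<n}" 2] by simp
  ultimately obtain h where h: "bij_betw h {0..<?N} (Ps n)"
    using ex_bij_betw_nat_finite by metis
  obtain L0 \<Gamma>0 where "exact_dist_coloring (n - 1) ?N n L0 (\<Gamma>0 :: 'a mat \<Rightarrow> nat)"
    using coloring_exists[of "n - 1" ?N n] assms by auto
  then have ex: "\<exists>L. \<exists>\<Gamma> :: 'a mat \<Rightarrow> nat. exact_dist_coloring (n - 1) ?N n L \<Gamma>" by blast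
  have "\<exists>\<Gamma> :: 'a mat \<Rightarrow> nat. exact_dist_coloring (n - 1) ?N n (chi TYPE('a) (n - 1) ?N n) \<Gamma>"
    unfolding chi_def by (rule LeastI_ex[OF ex])
  then obtain \<Gamma> :: "'a mat \<Rightarrow> nat" where "exact_dist_coloring (n - 1) ?N n (chi TYPE('a) (n - 1) ?N n) \<Gamma>" by blast
  from coloring_bound[OF h this] show ?thesis by simp
qed

end
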